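(* Let $k\ge 4$ and let $G=(V,E)$ be the cycle graph of the cycle $C=(v_0,\ldots,v_{k-1})$, i.e. $V=V(C)$ and $E=\textnormal{ext}(C)$. Then the inequality $$\sum_{f\in\textnormal{int}(C)}x_f\ \ge\ |C|-3$$ is facet-defining for $\textnormal{conv}(X(G))$.
   Context: $V(C)=\{v_0,\ldots,v_{k-1}\}$, $|C|=k$, $\textnormal{ext}(C)=\{\{v_{i-1},v_i\}: i=1,\ldots,k-1\}\cup\{\{v_{k-1},v_0\}\}$, $\textnormal{int}(C)=\binom{V(C)}{2}\setminus\textnormal{ext}(C)$; so here $E^c=\textnormal{int}(C)$. For $x\in\{0,1\}^{E^c}$, $E(x)=\{f:x_f=1\}$ and $X(G)=\{x\in\{0,1\}^{E^c}:(V,E\cup E(x))\text{ is chordal}\}$; a graph is chordal if every cycle with at least four vertices has a chord. *)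

theory Defs
  imports "HOL-Analysis.Analysis" "HOL-Library.Function_Algebras"
begin

text \<open>We use it as the ambient space R^I, where points of
  R^{int(C)} are functions that vanish outside int(C).\<close>

instantiation "fun" :: (type, real_vector) real_vector
begin
definition scaleR_fun_def: "scaleR a f = (\<lambda>x. scaleR a (f x))"
instance
  by standard (auto simp: scaleR_fun_def fun_eq_iff plus_fun_def scaleR_add_right scaleR_add_left)
end

definition affdim :: "'a::real_vector set \<Rightarrow> int" where
  "affdim S = (if S = {} then -1
               else int (dim ((\<lambda>x. x - (SOME a. a \<in> S)) ` S)))"

definition facet_defining :: "'a::real_vector set \<Rightarrow> ('a \<Rightarrow> real) \<Rightarrow> real \<Rightarrow> bool" where
  "facet_defining P g b \<longleftrightarrow>
     (\<forall>x\<in>P. g x \<ge> b) \<and>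
     {x\<in>P. g x = b} \<noteq> {} \<and>
     affdim {x\<in>P. g x = b} = affdim P - 1"

definition is_cycle :: "'v set \<Rightarrow> 'v set set \<Rightarrow> 'v list \<Rightarrow> bool" where
  "is_cycle V E cs \<longleftrightarrow> length cs \<ge> 3 \<and> distinct cs \<and> set cs \<subseteq> V \<and>
     (\<forall>i < length cs. {cs ! i, cs ! ((i + 1) mod length cs)} \<in> E)"

definition has_chord :: "'v set set \<Rightarrow> 'v list \<Rightarrow> bool" where
  "has_chord E cs \<longleftrightarrow> (\<exists>i j. i < length cs \<and> j < length cs \<and> i \<noteq> j \<and>
     j \<noteq> (i + 1) mod length cs \<and> i \<noteq> (j + 1) mod length cs \<and>
     {cs ! i, cs ! j} \<in> E)"

definition chordal :: "'v set \<Rightarrow> 'v set set \<Rightarrow> bool" where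
  "chordal V E \<longleftrightarrow> (\<forall>cs. is_cycle V E cs \<and> length cs \<ge> 4 \<longrightarrow> has_chord E cs)"

text \<open>The cycle C = (v_0,...,v_{k-1}) with v_i = i.\<close>

definition cyc_V :: "nat \<Rightarrow> nat set" where
  "cyc_V k = {..<k}"

definition cyc_ext :: "nat \<Rightarrow> nat set set" where
  "cyc_ext k = {{i - 1, i} | i. 1 \<le> i \<and> i \<le> k - 1} \<union> {{k - 1, 0}}"

definition cyc_int :: "nat \<Rightarrow> nat set set" where
  "cyc_int k = {{i, j} | i j. i < k \<and> j < k \<and> i \<noteq> j} - cyc_ext k"

text \<open>X(G) for G = (V(C), ext(C)), with E^c = int(C): 0/1 vectors on int(C)
  (functions vanishing outside int(C)) whose support completes G to a chordal graph.\<close>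

definition X_cyc :: "nat \<Rightarrow> (nat set \<Rightarrow> real) set" where
  "X_cyc k = {x. (\<forall>f\<in>cyc_int k. x f = 0 \<or> x f = 1) \<and>
                 (\<forall>f. f \<notin> cyc_int k \<longrightarrow> x f = 0) \<and>
                 chordal (cyc_V k) (cyc_ext k \<union> {f \<in> cyc_int k. x f = 1})}"

end

theory Submission
  imports Defs
begin

lemma ext_char:
  assumes "k \<ge> 2"
  shows "cyc_ext k = {{u, Suc u mod k} | u. u < k}"
proof
  show "cyc_ext k \<subseteq> {{u, Suc u mod k} | u. u < k}"
  proof
    fix e assume "e \<in> cyc_ext k"
    then consider i where "e = {i - 1, i}" "1 \<le> i" "i \<le> k - 1" | "e = {k - 1, 0}"
      unfolding cyc_ext_def by blast
    then show "e \<in> {{u, Suc u mod k} | u. u < k}"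
    proof cases
      case 1
      then show ?thesis using assms
        by (intro CollectI exI[of _ "i - 1"]) auto
    next
      case 2
      then show ?thesis using assms
        by (intro CollectI exI[of _ "k - 1"]) auto
    qed
  qed
next
  show "{{u, Suc u mod k} | u. u < k} \<subseteq> cyc_ext k"
  proof
    fix e assume "e \<in> {{u, Suc u mod k} | u. u < k}"
    then obtain u where u: "u < k" "e = {u, Suc u mod k}" by blast
    show "e \<in> cyc_ext k"
    proof (cases "Suc u = k")
      case True
      then show ?thesis using u unfolding cyc_ext_def by auto
    next
      case False
      then have "Suc u mod k = Suc u" using u by auto
      then show ?thesis using u False unfolding cyc_ext_def
        by (auto intro!: exI[of _ "Suc u"])
    qed
  qed
qed

lemma ext_mem:
  assumes "k \<ge> 2"
  shows "{p, q} \<in> cyc_ext k \<longleftrightarrow> (p < k \<and> q = Suc p mod k) \<or> (q < k \<and> p = Suc q mod k)"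
  unfolding ext_char[OF assms] by (auto simp: doubleton_eq_iff)

lemma int_char:
  assumes "k \<ge> 2"
  shows "cyc_int k = {{u, v} | u v. u < k \<and> v < k \<and> u \<noteq> v \<and> v \<noteq> Suc u mod k \<and> u \<noteq> Suc v mod k}"
  unfolding cyc_int_def using ext_mem[OF assms] by blast

lemma peo_chordal:
  assumes peo: "\<And>v u w. v \<in> V \<Longrightarrow> u \<in> V \<Longrightarrow> w \<in> V \<Longrightarrow> {v, u} \<in> E \<Longrightarrow> {v, w} \<in> E \<Longrightarrow>
     u \<noteq> w \<Longrightarrow> u \<noteq> v \<Longrightarrow> w \<noteq> v \<Longrightarrow> \<rho> v \<le> (\<rho> u :: nat) \<Longrightarrow> \<rho> v \<le> \<rho> w \<Longrightarrow> {u, w} \<in> E"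
  shows "chordal V E"
  unfolding chordal_def
proof (intro allI impI, elim conjE)
  fix cs :: "'a list"
  assume cyc: "is_cycle V E cs" and len: "4 \<le> length cs"
  define n where "n = length cs"
  have dist: "distinct cs" and sub: "set cs \<subseteq> V"
    and ed: "\<forall>i<n. {cs ! i, cs ! ((i + 1) mod n)} \<in> E"
    using cyc unfolding is_cycle_def n_def by auto
  have "\<exists>p<n. \<forall>q<n. \<rho> (cs ! p) \<le> \<rho> (cs ! q)"
  proof -
    have fin: "finite ((\<lambda>q. \<rho> (cs ! q)) ` {..<n})" by simp
    have ne: "(\<lambda>q. \<rho> (cs ! q)) ` {..<n} \<noteq> {}" using len n_def by (auto simp: lessThan_empty_iff)
    obtain p where "p < n" "\<rho> (cs ! p) = Min ((\<lambda>q. \<rho> (cs ! q)) ` {..<n})"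
      using Min_in[OF fin ne] by auto
    then show ?thesis using Min_le[OF fin] by auto
  qed
  then obtain p where p: "p < n" and pmin: "\<And>q. q < n \<Longrightarrow> \<rho> (cs ! p) \<le> \<rho> (cs ! q)" by blast
  define q1 where "q1 = (if p = 0 then n - 1 else p - 1)"
  define q2 where "q2 = (if p = n - 1 then 0 else p + 1)"
  have n4: "n \<ge> 4" using len n_def by simp
  have q1n: "q1 < n" and q2n: "q2 < n" using p n4 unfolding q1_def q2_def by auto
  have q1s: "(q1 + 1) mod n = p" using p n4 unfolding q1_def by auto
  have q2s: "(p + 1) mod n = q2" using p n4 unfolding q2_def by auto
  have q2ss: "(q2 + 1) mod n \<noteq> q1"
  proof (cases "Suc (Suc p) < n")
    case True then show ?thesis using p n4 unfolding q1_def q2_def by auto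
  next
    case False
    then consider "Suc (Suc p) = n" | "Suc p = n" using p by linarith
    then show ?thesis using p n4 unfolding q1_def q2_def by cases auto
  qed
  have ne: "q1 \<noteq> q2" "q1 \<noteq> p" "q2 \<noteq> p" using p n4 unfolding q1_def q2_def by auto
  have nth_inj: "\<And>a b. a < n \<Longrightarrow> b < n \<Longrightarrow> cs ! a = cs ! b \<Longrightarrow> a = b"
    using dist n_def nth_eq_iff_index_eq by blast
  have inV: "\<And>a. a < n \<Longrightarrow> cs ! a \<in> V" using sub n_def by auto
  have e1: "{cs ! p, cs ! q1} \<in> E" using ed q1n q1s by (metis insert_commute)
  have e2: "{cs ! p, cs ! q2} \<in> E" using ed p q2s by metis
  have "{cs ! q1, cs ! q2} \<in> E"
    using peo[OF inV[OF p] inV[OF q1n] inV[OF q2n] e1 e2] ne nth_inj p q1n q2n pmin by metis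
  then show "has_chord E cs"
    unfolding has_chord_def n_def[symmetric]
    using q1n q2n ne q1s q2ss by (intro exI[of _ q1] exI[of _ q2]) auto
qed

lemma Suc_mod_eq: "p < k \<Longrightarrow> Suc p mod k = (if Suc p = k then 0 else Suc p)"
  by auto

definition fan0 :: "nat \<Rightarrow> nat set set" where
  "fan0 k = {{0, j} | j. 2 \<le> j \<and> j \<le> k - 2}"

definition flip0 :: "nat \<Rightarrow> nat \<Rightarrow> nat set set" where
  "flip0 k j = insert {j - 1, j + 1} (fan0 k - {{0, j}})"

lemma fan0_mem: "{p, q} \<in> fan0 k \<longleftrightarrow> (p = 0 \<and> 2 \<le> q \<and> q \<le> k - 2) \<or> (q = 0 \<and> 2 \<le> p \<and> p \<le> k - 2)"
  unfolding fan0_def by (auto simp: doubleton_eq_iff)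

lemma flip0_mem: "{p, q} \<in> flip0 k j \<longleftrightarrow>
   ({p, q} = {j - 1, j + 1}) \<or> (((p = 0 \<and> 2 \<le> q \<and> q \<le> k - 2) \<or> (q = 0 \<and> 2 \<le> p \<and> p \<le> k - 2)) \<and> {p, q} \<noteq> {0, j})"
  unfolding flip0_def using fan0_mem[of p q k] by auto

lemma fan0_chordal:
  assumes "k \<ge> 4"
  shows "chordal (cyc_V k) (cyc_ext k \<union> fan0 k)"
proof (rule peo_chordal[where \<rho> = "\<lambda>v. if v = 0 then k else v"])
  fix v u w
  assume "v \<in> cyc_V k" "u \<in> cyc_V k" "w \<in> cyc_V k" "{v, u} \<in> cyc_ext k \<union> fan0 k"
    "{v, w} \<in> cyc_ext k \<union> fan0 k" "u \<noteq> w" "u \<noteq> v" "w \<noteq> v"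
    "(if v = 0 then k else v) \<le> (if u = 0 then k else u)"
    "(if v = 0 then k else v) \<le> (if w = 0 then k else w)"
  then show "{u, w} \<in> cyc_ext k \<union> fan0 k"
    using assms unfolding cyc_V_def
    by (simp add: ext_mem fan0_mem Suc_mod_eq split: if_splits) linarith?
qed


lemma ext_mem': "k \<ge> 2 \<Longrightarrow> p < k \<Longrightarrow> q < k \<Longrightarrow> {p, q} \<in> cyc_ext k \<longleftrightarrow>
   (q = (if Suc p = k then 0 else Suc p)) \<or> (p = (if Suc q = k then 0 else Suc q))"
  by (simp add: ext_mem Suc_mod_eq)

lemma flip_later:
  assumes k: "k \<ge> 4" "2 \<le> j" "j \<le> k - 2" and vu: "v < k" "u < k" "u \<noteq> v"
    and e: "{v, u} \<in> cyc_ext k \<union> flip0 k j"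
    and r: "(if v = j then 0 else if v = 0 then k else v) \<le> (if u = j then 0 else if u = 0 then k else u)"
  shows "(v = j \<and> (u = j - 1 \<or> u = j + 1)) \<or> (v = j - 1 \<and> (u = 0 \<or> u = j + 1))
       \<or> (v \<noteq> j \<and> v \<noteq> j - 1 \<and> v \<noteq> 0 \<and> (u = 0 \<or> u = v + 1))"
proof -
  have "{v, u} \<in> cyc_ext k \<or> {v, u} = {j - 1, j + 1} \<or>
    (((v = 0 \<and> 2 \<le> u \<and> u \<le> k - 2) \<or> (u = 0 \<and> 2 \<le> v \<and> v \<le> k - 2)) \<and> {v, u} \<noteq> {0, j})"
    using e by (simp only: Un_iff flip0_mem)
  then consider (a) "u = (if Suc v = k then 0 else Suc v)" | (b) "v = (if Suc u = k then 0 else Suc u)"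
    | (c) "v = j - 1" "u = j + 1" | (d) "u = j - 1" "v = j + 1"
    | (f) "v = 0" "2 \<le> u" "u \<le> k - 2" "u \<noteq> j" | (g) "u = 0" "2 \<le> v" "v \<le> k - 2" "v \<noteq> j"
    using ext_mem'[of k v u] k vu by (auto simp: doubleton_eq_iff)
  then show ?thesis
  proof cases
    case a then show ?thesis using k vu r by (auto split: if_splits)
  next
    case b then show ?thesis using k vu r by (auto split: if_splits)
  next
    case c then show ?thesis using k vu r by (auto split: if_splits)
  next
    case d then show ?thesis using k vu r by (auto split: if_splits)
  next
    case f then show ?thesis using k vu r by (auto split: if_splits)
  next
    case g then show ?thesis using k vu r by (auto split: if_splits)
  qed
qed

lemma pair_eq: "u \<in> {x, y} \<Longrightarrow> w \<in> {x, y} \<Longrightarrow> u \<noteq> w \<Longrightarrow> {u, w} = {x, y}"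
  by auto

lemma flip0_chordal:
  assumes k: "k \<ge> 4" "2 \<le> j" "j \<le> k - 2"
  shows "chordal (cyc_V k) (cyc_ext k \<union> flip0 k j)"
proof (rule peo_chordal[where \<rho> = "\<lambda>v. if v = j then 0 else if v = 0 then k else v"])
  fix v u w
  assume V: "v \<in> cyc_V k" "u \<in> cyc_V k" "w \<in> cyc_V k" and eu: "{v, u} \<in> cyc_ext k \<union> flip0 k j"
    and ew: "{v, w} \<in> cyc_ext k \<union> flip0 k j" and ne: "u \<noteq> w" "u \<noteq> v" "w \<noteq> v"
    and ru: "(if v = j then 0 else if v = 0 then k else v) \<le> (if u = j then 0 else if u = 0 then k else u)"
    and rw: "(if v = j then 0 else if v = 0 then k else v) \<le> (if w = j then 0 else if w = 0 then k else w)"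
  have lt: "v < k" "u < k" "w < k" using V unfolding cyc_V_def by auto
  note Lu = flip_later[OF k lt(1) lt(2) ne(2) eu ru]
  note Lw = flip_later[OF k lt(1) lt(3) ne(3) ew rw]
  have "{u, w} = {j - 1, j + 1} \<or> {u, w} = {0, j + 1} \<or> ({u, w} = {0, v + 1} \<and> v \<noteq> j \<and> v \<noteq> j - 1 \<and> v \<noteq> 0)"
  proof (cases "v = j")
    case True
    then have "u \<in> {j - 1, j + 1}" "w \<in> {j - 1, j + 1}" using Lu Lw k by auto
    then show ?thesis using pair_eq ne(1) by blast
  next
    case F1: False
    show ?thesis
    proof (cases "v = j - 1")
      case True
      then have "u \<in> {0, j + 1}" "w \<in> {0, j + 1}" using Lu Lw k F1 by auto
      then show ?thesis using pair_eq ne(1) by blast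
    next
      case False
      then have "u \<in> {0, v + 1}" "w \<in> {0, v + 1}" "v \<noteq> 0" using Lu Lw k F1 by auto
      then show ?thesis using pair_eq[of u 0 "v + 1" w] ne(1) F1 False by blast
    qed
  qed
  then consider (a) "{u, w} = {j - 1, j + 1}" | (b) "{u, w} = {0, j + 1}"
    | (c) "{u, w} = {0, v + 1}" "v \<noteq> j" "v \<noteq> j - 1" "v \<noteq> 0" by meson
  then show "{u, w} \<in> cyc_ext k \<union> flip0 k j"
  proof cases
    case a then show ?thesis by (simp add: flip0_def)
  next
    case b
    have "j + 1 < k" using k by arith
    show ?thesis
    proof (cases "j + 1 = k - 1")
      case True
      then have "{0, j + 1} \<in> cyc_ext k" using k by (subst ext_mem') auto
      then show ?thesis using b by simp
    next
      case False
      then have "2 \<le> j + 1 \<and> j + 1 \<le> k - 2" using k \<open>j + 1 < k\<close> by arith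
      then have "{0, j + 1} \<in> flip0 k j" by (subst flip0_mem) (simp add: doubleton_eq_iff)
      then show ?thesis using b by simp
    qed
  next
    case c
    have "v + 1 \<in> {u, w}" using c by simp
    then have "v + 1 < k" using lt by auto
    show ?thesis
    proof (cases "v + 1 = k - 1")
      case True
      then have "{0, v + 1} \<in> cyc_ext k" using k by (subst ext_mem') auto
      then show ?thesis using c by simp
    next
      case False
      then have "2 \<le> v + 1 \<and> v + 1 \<le> k - 2" "v + 1 \<noteq> j" using k c \<open>v + 1 < k\<close> by arith+
      then have "{0, v + 1} \<in> flip0 k j" by (subst flip0_mem) (simp add: doubleton_eq_iff)
      then show ?thesis using c by simp
    qed
  qed
qed

definition rot :: "nat \<Rightarrow> nat \<Rightarrow> nat set \<Rightarrow> nat set" where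
  "rot k a e = (\<lambda>i. (i + a) mod k) ` e"

lemma rot_pair: "rot k a {u, v} = {(u + a) mod k, (v + a) mod k}"
  unfolding rot_def by simp

lemma rot_rot:
  assumes "e \<subseteq> {..<k}" "a \<le> k"
  shows "rot k (k - a) (rot k a e) = e"
proof -
  have "((i + a) mod k + (k - a)) mod k = i" if "i < k" for i
  proof -
    have "((i + a) mod k + (k - a)) mod k = (i + a + (k - a)) mod k" by (simp add: mod_simps)
    also have "i + a + (k - a) = i + k" using assms by simp
    finally show ?thesis using that by simp
  qed
  then show ?thesis using assms unfolding rot_def image_image
    by (auto simp: subset_iff image_iff)
qed

lemma rot_ext_sub:
  assumes "k \<ge> 2"
  shows "rot k a ` cyc_ext k \<subseteq> cyc_ext k"
proof
  fix e assume "e \<in> rot k a ` cyc_ext k"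
  then obtain u where u: "u < k" "e = rot k a {u, Suc u mod k}" using ext_char[OF assms] by auto
  have "(Suc u mod k + a) mod k = Suc ((u + a) mod k) mod k" by (simp add: mod_simps)
  then have "e = {(u + a) mod k, Suc ((u + a) mod k) mod k}" using u by (simp add: rot_pair)
  moreover have "(u + a) mod k < k" using assms by simp
  ultimately show "e \<in> cyc_ext k" using ext_char[OF assms] by blast
qed

lemma ext_sub: "k \<ge> 2 \<Longrightarrow> e \<in> cyc_ext k \<Longrightarrow> e \<subseteq> {..<k}"
  using ext_char[of k] by auto

lemma int_sub: "e \<in> cyc_int k \<Longrightarrow> e \<subseteq> {..<k}"
  unfolding cyc_int_def by auto

lemma rot_ext_eq:
  assumes "k \<ge> 2" "a \<le> k"
  shows "rot k a ` cyc_ext k = cyc_ext k"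
proof
  show "rot k a ` cyc_ext k \<subseteq> cyc_ext k" by (rule rot_ext_sub[OF assms(1)])
  show "cyc_ext k \<subseteq> rot k a ` cyc_ext k"
  proof
    fix e assume e: "e \<in> cyc_ext k"
    then have "rot k (k - a) e \<in> cyc_ext k" using rot_ext_sub[OF assms(1)] by blast
    moreover have "rot k (k - (k - a)) (rot k (k - a) e) = e"
      using rot_rot[OF ext_sub[OF assms(1) e], of "k - a"] by simp
    then have "rot k a (rot k (k - a) e) = e" using assms by simp
    ultimately show "e \<in> rot k a ` cyc_ext k" by (metis imageI)
  qed
qed

lemma rot_int_sub:
  assumes "k \<ge> 2" "a \<le> k" "S \<subseteq> cyc_int k"
  shows "rot k a ` S \<subseteq> cyc_int k"
proof
  fix e assume "e \<in> rot k a ` S"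
  then obtain d where d: "d \<in> S" "e = rot k a d" by blast
  then obtain u v where uv: "d = {u, v}" "u < k" "v < k" "u \<noteq> v" "d \<notin> cyc_ext k"
    using assms(3) unfolding cyc_int_def by blast
  have ne: "(u + a) mod k \<noteq> (v + a) mod k"
  proof
    assume h: "(u + a) mod k = (v + a) mod k"
    have "rot k (k - a) (rot k a {u}) = {u}" "rot k (k - a) (rot k a {v}) = {v}"
      using rot_rot[of "{u}" k a] rot_rot[of "{v}" k a] uv assms by auto
    then show False using h uv unfolding rot_def by auto
  qed
  have "e \<notin> cyc_ext k"
  proof
    assume "e \<in> cyc_ext k"
    then have "rot k (k - a) e \<in> cyc_ext k" using rot_ext_sub[OF assms(1)] by blast
    moreover have "rot k (k - a) e = d" using rot_rot[of d k a] uv assms d by auto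
    ultimately show False using uv by simp
  qed
  moreover have "e = {(u + a) mod k, (v + a) mod k}" using d uv by (simp add: rot_pair)
  moreover have "(u + a) mod k < k" "(v + a) mod k < k" using uv by auto
  ultimately show "e \<in> cyc_int k" unfolding cyc_int_def using ne by blast
qed

lemma rot_inj:
  assumes "a \<le> k"
  shows "inj_on (rot k a) (Pow {..<k})"
  by (rule inj_on_inverseI[where g = "rot k (k - a)"]) (use rot_rot assms in auto)

lemma rot_sub: "0 < k \<Longrightarrow> rot k a e \<subseteq> {..<k}"
  unfolding rot_def by auto

lemma chordal_iso:
  assumes bij: "bij_betw h V V" and EV: "\<forall>e\<in>E. e \<subseteq> V" and ch: "chordal V E"
  shows "chordal V ((`) h ` E)"
  unfolding chordal_def
proof (intro allI impI, elim conjE)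
  fix cs assume cyc: "is_cycle V ((`) h ` E) cs" and len: "4 \<le> length cs"
  define g where "g = inv_into V h"
  have inj: "inj_on h V" and hV: "h ` V = V" using bij by (auto simp: bij_betw_def)
  have gh: "\<And>x. x \<in> V \<Longrightarrow> g (h x) = x" using inj g_def by simp
  have hg: "\<And>y. y \<in> V \<Longrightarrow> h (g y) = y" using hV g_def by (simp add: f_inv_into_f)
  have gV: "\<And>y. y \<in> V \<Longrightarrow> g y \<in> V" using hV g_def by (metis inv_into_into)
  have ginj: "inj_on g V" using hg by (metis inj_on_inverseI)
  define cs' where "cs' = map g cs"
  have sub: "set cs \<subseteq> V" using cyc unfolding is_cycle_def by auto
  have pair: "{g x, g y} \<in> E" if xy: "x \<in> V" "y \<in> V" "{x, y} \<in> (`) h ` E" for x y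
  proof -
    obtain e where e: "e \<in> E" "h ` e = {x, y}" using xy(3) by (metis imageE)
    have "e \<subseteq> V" using EV e by auto
    then have "g ` h ` e = e" using gh by (auto simp: image_iff) (metis imageI gh subsetD)
    then show ?thesis using e by simp
  qed
  have "is_cycle V E cs'"
    unfolding is_cycle_def cs'_def
  proof (intro conjI allI impI)
    show "3 \<le> length (map g cs)" using cyc unfolding is_cycle_def by simp
    show "distinct (map g cs)" using cyc ginj sub unfolding is_cycle_def
      by (simp add: distinct_map inj_on_subset)
    show "set (map g cs) \<subseteq> V" using sub gV by auto
    fix i assume i: "i < length (map g cs)"
    have "{cs ! i, cs ! ((i + 1) mod length cs)} \<in> (`) h ` E"
      using cyc i unfolding is_cycle_def by simp
    moreover have "0 < length cs" using i by (cases cs) auto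
    then have bnd: "(i + 1) mod length cs < length cs" by simp
    then have "cs ! i \<in> V" "cs ! ((i + 1) mod length cs) \<in> V" using sub i nth_mem by (simp_all add: subset_iff)
    ultimately show "{map g cs ! i, map g cs ! ((i + 1) mod length (map g cs))} \<in> E"
      using pair i bnd by simp
  qed
  then have "has_chord E cs'" using ch len unfolding chordal_def cs'_def by simp
  then obtain i j where ij: "i < length cs" "j < length cs" "i \<noteq> j"
    "j \<noteq> (i + 1) mod length cs" "i \<noteq> (j + 1) mod length cs" "{cs' ! i, cs' ! j} \<in> E"
    unfolding has_chord_def cs'_def by auto
  have "cs ! i \<in> V" "cs ! j \<in> V" using ij(1,2) sub nth_mem by (simp_all add: subset_iff)
  then have "h ` {cs' ! i, cs' ! j} = {cs ! i, cs ! j}"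
    using ij hg unfolding cs'_def by auto
  then have "{cs ! i, cs ! j} \<in> (`) h ` E" using ij(6) by (metis imageI)
  then show "has_chord ((`) h ` E) cs" unfolding has_chord_def using ij by blast
qed

lemma rot_bij:
  fixes a k :: nat
  assumes "a \<le> k" "0 < k"
  shows "bij_betw (\<lambda>i. (i + a) mod k) {..<k} {..<k}"
proof -
  have inj: "inj_on (\<lambda>i. (i + a) mod k) {..<k}"
  proof (rule inj_onI)
    fix i j assume ij: "i \<in> {..<k}" "j \<in> {..<k}" "(i + a) mod k = (j + a) mod k"
    then have "rot k (k - a) (rot k a {i}) = rot k (k - a) (rot k a {j})" unfolding rot_def by simp
    then show "i = j" using rot_rot[of "{i}" k a] rot_rot[of "{j}" k a] ij assms by auto
  qed
  have "(\<lambda>i. (i + a) mod k) ` {..<k} \<subseteq> {..<k}" using assms by auto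
  then have "(\<lambda>i. (i + a) mod k) ` {..<k} = {..<k}" using inj by (simp add: endo_inj_surj)
  then show ?thesis using inj by (simp add: bij_betw_def)
qed

definition ind :: "nat set set \<Rightarrow> nat set \<Rightarrow> real" where
  "ind T = (\<lambda>f. if f \<in> T then 1 else 0)"

lemma ind_X:
  assumes "T \<subseteq> cyc_int k" "chordal (cyc_V k) (cyc_ext k \<union> T)"
  shows "ind T \<in> X_cyc k"
proof -
  have "{f \<in> cyc_int k. ind T f = 1} = T" using assms(1) unfolding ind_def by auto
  then show ?thesis using assms unfolding X_cyc_def ind_def by auto
qed

lemma finite_int: "finite (cyc_int k)"
proof -
  have "cyc_int k \<subseteq> Pow {..<k}" using int_sub by auto
  then show ?thesis by (rule finite_subset) simp
qed

lemma sum_ind: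
  assumes "T \<subseteq> cyc_int k"
  shows "(\<Sum>f\<in>cyc_int k. ind T f) = real (card T)"
proof -
  have "(\<Sum>f\<in>cyc_int k. ind T f) = (\<Sum>f\<in>cyc_int k. if f \<in> T then 1 else 0)" unfolding ind_def by simp
  also have "\<dots> = real (card (cyc_int k \<inter> T))" by (simp add: sum.If_cases finite_int)
  finally show ?thesis using assms by (simp add: Int_absorb1)
qed

lemma rot_X:
  assumes k: "k \<ge> 4" "a < k" and S: "S \<subseteq> cyc_int k" and ch: "chordal (cyc_V k) (cyc_ext k \<union> S)"
  shows "ind (rot k a ` S) \<in> X_cyc k" "card (rot k a ` S) = card S"
proof -
  have bij: "bij_betw (\<lambda>i. (i + a) mod k) (cyc_V k) (cyc_V k)" using rot_bij[of a k] k unfolding cyc_V_def by simp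
  have EV: "\<forall>e\<in>cyc_ext k \<union> S. e \<subseteq> cyc_V k" using ext_sub[of k] int_sub[of _ k] S k unfolding cyc_V_def by auto
  have "chordal (cyc_V k) ((`) (\<lambda>i. (i + a) mod k) ` (cyc_ext k \<union> S))"
    by (rule chordal_iso[OF bij EV ch])
  moreover have "(`) (\<lambda>i. (i + a) mod k) = rot k a" unfolding rot_def by (rule ext) simp
  ultimately have "chordal (cyc_V k) (rot k a ` cyc_ext k \<union> rot k a ` S)" by (simp add: image_Un)
  then have "chordal (cyc_V k) (cyc_ext k \<union> rot k a ` S)" using rot_ext_eq[of k a] k by simp
  moreover have "rot k a ` S \<subseteq> cyc_int k" using rot_int_sub[of k a S] k S by simp
  ultimately show "ind (rot k a ` S) \<in> X_cyc k" by (rule ind_X[rotated])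
  have "inj_on (rot k a) S" using rot_inj[of a k] k S int_sub[of _ k] by (meson inj_on_subset less_imp_le PowI subsetI subset_iff)
  then show "card (rot k a ` S) = card S" by (rule card_image)
qed

lemma int_intro: "u < k \<Longrightarrow> v < k \<Longrightarrow> u \<noteq> v \<Longrightarrow> {u, v} \<notin> cyc_ext k \<Longrightarrow> {u, v} \<in> cyc_int k"
  unfolding cyc_int_def by blast

lemma fan0_int: assumes "k \<ge> 4" shows "fan0 k \<subseteq> cyc_int k"
proof
  fix e assume "e \<in> fan0 k"
  then obtain j where j: "e = {0, j}" "2 \<le> j" "j \<le> k - 2" unfolding fan0_def by blast
  have "j < k" using j assms by arith
  have "e \<notin> cyc_ext k" using j assms \<open>j < k\<close> by (simp add: ext_mem')
  then show "e \<in> cyc_int k" using int_intro[of 0 k j] j \<open>j < k\<close> assms by auto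
qed

lemma flip0_int: assumes "k \<ge> 4" "2 \<le> j" "j \<le> k - 2" shows "flip0 k j \<subseteq> cyc_int k"
proof -
  have "j + 1 < k" using assms by arith
  have "{j - 1, j + 1} \<notin> cyc_ext k" using assms \<open>j + 1 < k\<close> by (simp add: ext_mem'; arith)
  then have "{j - 1, j + 1} \<in> cyc_int k" using int_intro[of "j - 1" k "j + 1"] assms \<open>j + 1 < k\<close>
    by auto
  then show ?thesis unfolding flip0_def using fan0_int[OF assms(1)] by auto
qed

lemma card_fan0: "card (fan0 k) = k - 3"
proof -
  have "fan0 k = (\<lambda>j. {0, j}) ` {2..k-2}" unfolding fan0_def by auto
  moreover have "inj_on (\<lambda>j. {0::nat, j}) {2..k-2}" by (rule inj_onI) (auto simp: doubleton_eq_iff)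
  ultimately show ?thesis by (simp add: card_image)
qed

lemma card_flip0:
  assumes "k \<ge> 4" "2 \<le> j" "j \<le> k - 2" shows "card (flip0 k j) = k - 3"
proof -
  have fin: "finite (fan0 k)" using fan0_int[OF assms(1)] finite_int finite_subset by blast
  have "{0, j} \<in> fan0 k" using assms unfolding fan0_def by auto
  moreover have "{j - 1, j + 1} \<notin> fan0 k" using assms by (simp add: fan0_mem)
  ultimately show ?thesis using fin card_fan0[of k] assms unfolding flip0_def
    by (simp add: card_insert_if)
qed

lemma pair_in_full: "u < k \<Longrightarrow> w < k \<Longrightarrow> u \<noteq> w \<Longrightarrow> {u, w} \<in> cyc_ext k \<union> cyc_int k"
  using int_intro[of u k w] by blast

lemma full_X: "ind (cyc_int k) \<in> X_cyc k"
proof (rule ind_X)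
  show "chordal (cyc_V k) (cyc_ext k \<union> cyc_int k)"
    by (rule peo_chordal[where \<rho> = "\<lambda>v. 0"]) (metis pair_in_full cyc_V_def lessThan_iff)
qed simp

lemma fullm_X:
  assumes f: "f \<in> cyc_int k"
  shows "ind (cyc_int k - {f}) \<in> X_cyc k"
proof (rule ind_X)
  obtain p q where pq: "f = {p, q}" "p \<noteq> q" using f unfolding cyc_int_def by blast
  show "chordal (cyc_V k) (cyc_ext k \<union> (cyc_int k - {f}))"
  proof (rule peo_chordal[where \<rho> = "\<lambda>v. if v = p then 0 else 1"])
    fix v u w
    assume V: "v \<in> cyc_V k" "u \<in> cyc_V k" "w \<in> cyc_V k" and ne: "u \<noteq> w" "u \<noteq> v" "w \<noteq> v"
      and r: "(if v = p then 0 else 1) \<le> (if u = p then 0 else (1::nat))" 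
        "(if v = p then 0 else 1) \<le> (if w = p then 0 else (1::nat))"
    have "{u, w} \<in> cyc_ext k \<union> cyc_int k" using V ne by (intro pair_in_full) (auto simp: cyc_V_def)
    moreover have "{u, w} \<noteq> f"
    proof
      assume "{u, w} = f"
      then have "u = p \<or> w = p" using pq by (auto simp: doubleton_eq_iff)
      then show False using r ne by (auto split: if_splits)
    qed
    ultimately show "{u, w} \<in> cyc_ext k \<union> (cyc_int k - {f})" by blast
  qed
qed auto

definition cedges :: "'a list \<Rightarrow> 'a set set" where
  "cedges cs = {{cs ! i, cs ! ((i + 1) mod length cs)} | i. i < length cs}"

definition chs :: "'a set set \<Rightarrow> 'a list \<Rightarrow> 'a set set" where
  "chs E cs = {e \<in> E. e \<subseteq> set cs} - cedges cs"

lemma cedges_rotate: "cedges (rotate r cs) = cedges cs"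
proof (cases "cs = []")
  case True then show ?thesis by simp
next
  case False
  define n where "n = length cs"
  have n: "0 < n" using False n_def by simp
  have len: "length (rotate r cs) = n" using n_def by simp
  have key: "(r + Suc i mod n) mod n = Suc ((i + r) mod n) mod n" "(r + i) mod n = (i + r) mod n" "(Suc i mod n + r) mod n = Suc ((i + r) mod n) mod n" for i
    by (simp_all add: mod_simps add.commute)
  show ?thesis
  proof
    show "cedges (rotate r cs) \<subseteq> cedges cs"
    proof
      fix e assume "e \<in> cedges (rotate r cs)"
      then obtain i where i: "i < n" "e = {rotate r cs ! i, rotate r cs ! ((i + 1) mod n)}"
        unfolding cedges_def len by blast
      then have "e = {cs ! ((i + r) mod n), cs ! (((i + r) mod n + 1) mod n)}"
        using n by (simp add: nth_rotate n_def[symmetric] key)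
      moreover have "(i + r) mod n < n" using n by simp
      ultimately show "e \<in> cedges cs" unfolding cedges_def n_def by blast
    qed
    show "cedges cs \<subseteq> cedges (rotate r cs)"
    proof
      fix e assume "e \<in> cedges cs"
      then obtain l where l: "l < n" "e = {cs ! l, cs ! ((l + 1) mod n)}"
        unfolding cedges_def n_def by blast
      define i where "i = (l + (n - r mod n)) mod n"
      have "(i + r) mod n = (l + (n - r mod n) + r mod n) mod n" unfolding i_def by (simp add: mod_simps)
      also have "l + (n - r mod n) + r mod n = l + n"
      proof -
        have "r mod n < n" using n by simp
        then show ?thesis by linarith
      qed
      finally have ir: "(i + r) mod n = l" using l by simp
      have "i < n" using n unfolding i_def by simp
      then have "e = {rotate r cs ! i, rotate r cs ! ((i + 1) mod n)}"
        using l n by (simp add: nth_rotate n_def[symmetric] key ir)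
      then show "e \<in> cedges (rotate r cs)" unfolding cedges_def len using \<open>i < n\<close> by blast
    qed
  qed
qed

lemma chs_rotate: "chs E (rotate r cs) = chs E cs"
  unfolding chs_def by (simp add: cedges_rotate)

lemma cedgesI: "i < length cs \<Longrightarrow> {cs ! i, cs ! ((i + 1) mod length cs)} \<in> cedges cs"
  unfolding cedges_def by blast

lemma cedgesE: "e \<in> cedges cs \<Longrightarrow> (\<And>i. i < length cs \<Longrightarrow> e = {cs ! i, cs ! ((i + 1) mod length cs)} \<Longrightarrow> P) \<Longrightarrow> P"
  unfolding cedges_def by blast

lemma split_step:
  assumes n: "length cs = n" "4 \<le> n" and dist: "distinct cs" and sub: "set cs \<subseteq> V"
    and ced: "cedges cs \<subseteq> E" and card2: "\<forall>e\<in>E. card e = 2"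
    and j: "2 \<le> j" "j \<le> n - 2" and c: "{cs ! 0, cs ! j} \<in> E"
    and IH: "\<And>ds. length ds < n \<Longrightarrow> 3 \<le> length ds \<Longrightarrow> distinct ds \<Longrightarrow> set ds \<subseteq> V \<Longrightarrow>
              cedges ds \<subseteq> E \<Longrightarrow> length ds - 3 \<le> card (chs E ds)"
  shows "n - 3 \<le> card (chs E cs)"
proof -
  define cs1 where "cs1 = take (j + 1) cs"
  define cs2 where "cs2 = drop j cs @ [cs ! 0]"
  define c where "c = {cs ! 0, cs ! j}"
  have jn: "j + 2 \<le> n" using j n by arith
  have l1: "length cs1 = j + 1" using jn n unfolding cs1_def by simp
  have l2: "length cs2 = n - j + 1" using jn n unfolding cs2_def by simp
  have nth1: "cs1 ! m = cs ! m" if "m \<le> j" for m using that unfolding cs1_def by simp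
  have nth2a: "cs2 ! m = cs ! (j + m)" if "m < n - j" for m
    using that jn n unfolding cs2_def by (simp add: nth_append)
  have nth2b: "cs2 ! (n - j) = cs ! 0" using jn n unfolding cs2_def by (simp add: nth_append)
  have inj: "a = b" if "a < n" "b < n" "cs ! a = cs ! b" for a b
    using that dist n nth_eq_iff_index_eq by blast
  have set1: "set cs1 = (\<lambda>m. cs ! m) ` {0..<j+1}" unfolding cs1_def using jn n by (simp add: nth_image)
  have setd: "set (drop j cs) = (\<lambda>m. cs ! m) ` {j..<n}"
  proof
    show "set (drop j cs) \<subseteq> (\<lambda>m. cs ! m) ` {j..<n}"
    proof
      fix x assume "x \<in> set (drop j cs)"
      then obtain i where i: "i < length (drop j cs)" "drop j cs ! i = x" by (auto simp: in_set_conv_nth)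
      then have "x = cs ! (j + i)" "j + i \<in> {j..<n}" using n jn by auto
      then show "x \<in> (\<lambda>m. cs ! m) ` {j..<n}" by blast
    qed
    show "(\<lambda>m. cs ! m) ` {j..<n} \<subseteq> set (drop j cs)"
    proof
      fix x assume "x \<in> (\<lambda>m. cs ! m) ` {j..<n}"
      then obtain m where m: "m \<in> {j..<n}" "x = cs ! m" by blast
      then have "drop j cs ! (m - j) = x" "m - j < length (drop j cs)" using n by auto
      then show "x \<in> set (drop j cs)" by (metis nth_mem)
    qed
  qed
  have set2: "set cs2 = insert (cs ! 0) ((\<lambda>m. cs ! m) ` {j..<n})" unfolding cs2_def using setd by simp
  have in0: "cs ! 0 \<notin> (\<lambda>m. cs ! m) ` {j..<n}" using inj j jn by fastforce
  have d1: "distinct cs1" unfolding cs1_def using dist by simp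
  have d2: "distinct cs2" unfolding cs2_def using dist in0 setd by simp
  have s1: "set cs1 \<subseteq> set cs" "set cs2 \<subseteq> set cs" using n jn unfolding cs1_def cs2_def
    by (auto dest: in_set_takeD in_set_dropD)
  have ce1: "cedges cs1 \<subseteq> E"
  proof
    fix e assume "e \<in> cedges cs1"
    then obtain i where i: "i < j + 1" "e = {cs1 ! i, cs1 ! ((i + 1) mod (j + 1))}"
      by (auto elim!: cedgesE simp: l1)
    show "e \<in> E"
    proof (cases "i < j")
      case True
      then have "e = {cs ! i, cs ! ((i + 1) mod n)}" using i nth1 jn by simp
      then show ?thesis using cedgesI[of i cs] ced n jn True by auto
    next
      case False
      then have "i = j" using i by simp
      then have "e = {cs ! j, cs ! 0}" using i nth1 by simp
      then show ?thesis using c by (simp add: insert_commute)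
    qed
  qed
  have c1: "c \<in> cedges cs1"
    using cedgesI[of j cs1] l1 nth1[of j] nth1[of 0] unfolding c_def by (simp add: insert_commute)
  have ce2: "cedges cs2 \<subseteq> E"
  proof
    fix e assume "e \<in> cedges cs2"
    then obtain i where i: "i < n - j + 1" "e = {cs2 ! i, cs2 ! ((i + 1) mod (n - j + 1))}"
      by (auto elim!: cedgesE simp: l2)
    show "e \<in> E"
    proof (cases "i + 1 < n - j")
      case True
      then have "e = {cs ! (j + i), cs ! ((j + i + 1) mod n)}" using i nth2a jn by simp
      then show ?thesis using cedgesI[of "j + i" cs] ced n jn True by auto
    next
      case False
      show ?thesis
      proof (cases "i + 1 = n - j")
        case True
        have a1: "j + i = n - 1" using True jn by arith
        have a2: "(i + 1) mod (n - j + 1) = n - j" using True by simp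
        have "cs2 ! i = cs ! (n - 1)" using nth2a[of i] True a1 by simp
        then have "e = {cs ! (n - 1), cs ! 0}" using i(2) a2 nth2b by simp
        moreover have "(n - 1 + 1) mod n = 0" using n by simp
        ultimately show ?thesis using cedgesI[of "n - 1" cs] ced n by auto
      next
        case F2: False
        then have "i = n - j" using False i by arith
        then have "e = {cs ! 0, cs ! j}" using i nth2a[of 0] nth2b jn by simp
        then show ?thesis using c by simp
      qed
    qed
  qed
  have c2: "c \<in> cedges cs2"
  proof -
    have "{cs2 ! (n - j), cs2 ! ((n - j + 1) mod (n - j + 1))} \<in> cedges cs2"
      using cedgesI[of "n - j" cs2] l2 by simp
    then show ?thesis using nth2a[of 0] nth2b jn unfolding c_def by simp
  qed
  have modn: "(l + 1) mod n = (if l + 1 = n then 0 else l + 1)" if "l < n" for l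
    using that by auto
  have inE: "cs ! l \<in> set cs" if "l < n" for l using that n by simp
  have cc: "c \<in> chs E cs"
  proof -
    have "c \<notin> cedges cs"
    proof
      assume "c \<in> cedges cs"
      then obtain l where l: "l < n" "c = {cs ! l, cs ! ((l + 1) mod n)}" by (auto elim!: cedgesE simp: n)
      have l1n: "(l + 1) mod n < n" using n by simp
      have "cs ! 0 = cs ! l \<or> cs ! 0 = cs ! ((l + 1) mod n)" "cs ! j = cs ! l \<or> cs ! j = cs ! ((l + 1) mod n)"
        using l unfolding c_def by (auto simp: doubleton_eq_iff)
      then have "(0 = l \<or> 0 = (l + 1) mod n) \<and> (j = l \<or> j = (l + 1) mod n)"
        using inj[of 0 l] inj[of 0 "(l + 1) mod n"] inj[of j l] inj[of j "(l + 1) mod n"] l(1) l1n jn n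
        by auto
      then show False using modn[OF l(1)] jn j n l(1) by (auto split: if_splits)
    qed
    moreover have "c \<subseteq> set cs" unfolding c_def using inE jn n by auto
    ultimately show ?thesis using c unfolding chs_def c_def by simp
  qed
  have ch1: "e \<in> chs E cs \<and> e \<noteq> c" if e: "e \<in> chs E cs1" for e
  proof -
    have eE: "e \<in> E" "e \<subseteq> set cs1" "e \<notin> cedges cs1" using e unfolding chs_def by auto
    have "e \<notin> cedges cs"
    proof
      assume "e \<in> cedges cs"
      then obtain l where l: "l < n" "e = {cs ! l, cs ! ((l + 1) mod n)}" by (auto elim!: cedgesE simp: n)
      have l1n: "(l + 1) mod n < n" using n by simp
      obtain a where a: "a < j + 1" "cs ! l = cs ! a" using eE(2) l set1 by auto
      then have "l = a" using inj l(1) jn by simp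
      then have ll: "(l + 1) mod n = l + 1" using a jn by simp
      obtain b where b: "b < j + 1" "cs ! (l + 1) = cs ! b" using eE(2) l set1 ll by auto
      then have "l + 1 = b" using inj[of "l + 1" b] ll l1n jn by simp
      then have "e = {cs1 ! l, cs1 ! ((l + 1) mod (j + 1))}" using l ll b nth1 by simp
      moreover have "l < length cs1" using l1 b \<open>l + 1 = b\<close> by simp
      ultimately show False using cedgesI[of l cs1] eE(3) l1 by simp
    qed
    then show ?thesis using eE s1 c1 unfolding chs_def by auto
  qed
  have ch2: "e \<in> chs E cs \<and> e \<noteq> c" if e: "e \<in> chs E cs2" for e
  proof -
    have eE: "e \<in> E" "e \<subseteq> set cs2" "e \<notin> cedges cs2" using e unfolding chs_def by auto
    have "e \<notin> cedges cs"
    proof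
      assume "e \<in> cedges cs"
      then obtain l where l: "l < n" "e = {cs ! l, cs ! ((l + 1) mod n)}" by (auto elim!: cedgesE simp: n)
      have l1n: "(l + 1) mod n < n" using n by simp
      have pos: "p = 0 \<or> j \<le> p" if "p < n" "cs ! p \<in> set cs2" for p
      proof -
        have "cs ! p = cs ! 0 \<or> (\<exists>b\<in>{j..<n}. cs ! p = cs ! b)" using that(2) set2 by auto
        then show ?thesis
        proof
          assume "cs ! p = cs ! 0"
          then show ?thesis using inj[of p 0] that(1) n by simp
        next
          assume "\<exists>b\<in>{j..<n}. cs ! p = cs ! b"
          then obtain b where "b \<in> {j..<n}" "cs ! p = cs ! b" by blast
          then show ?thesis using inj[of p b] that(1) by simp
        qed
      qed
      have pl: "l = 0 \<or> j \<le> l" using pos[OF l(1)] eE(2) l by auto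
      have pl1: "(l + 1) mod n = 0 \<or> j \<le> (l + 1) mod n" using pos[OF l1n] eE(2) l by auto
      show False
      proof (cases "l + 1 = n")
        case True
        have a1: "n - j - 1 < n - j" "j + (n - j - 1) = n - 1" using jn by arith+
        have a2: "(n - j - 1 + 1) mod (n - j + 1) = n - j" using jn by simp
        have "l = n - 1" using True by simp
        then have "e = {cs ! (n - 1), cs ! 0}" using l True by simp
        also have "\<dots> = {cs2 ! (n - j - 1), cs2 ! ((n - j - 1 + 1) mod (n - j + 1))}"
          using nth2a[OF a1(1)] a1(2) a2 nth2b by simp
        finally have "e \<in> cedges cs2" using cedgesI[of "n - j - 1" cs2] l2 jn by simp
        then show False using eE by simp
      next
        case False
        then have ll: "(l + 1) mod n = l + 1" using l by simp
        have "j \<le> l" using pl pl1 ll j by auto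
        have a1: "l - j < n - j" "l - j + 1 < n - j" "j + (l - j) = l" "j + (l - j + 1) = l + 1"
          using \<open>j \<le> l\<close> l False by arith+
        have a2: "(l - j + 1) mod (n - j + 1) = l - j + 1" using a1 by simp
        have "e = {cs ! l, cs ! (l + 1)}" using l ll by simp
        also have "\<dots> = {cs2 ! (l - j), cs2 ! ((l - j + 1) mod (n - j + 1))}"
          using nth2a[OF a1(1)] nth2a[OF a1(2)] a1 a2 by simp
        finally have "e \<in> cedges cs2" using cedgesI[of "l - j" cs2] l2 a1 by simp
        then show False using eE by simp
      qed
    qed
    then show ?thesis using eE s1 c2 unfolding chs_def by auto
  qed
  have disj: "chs E cs1 \<inter> chs E cs2 = {}"
  proof (rule ccontr)
    assume "chs E cs1 \<inter> chs E cs2 \<noteq> {}"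
    then obtain e where e1: "e \<in> chs E cs1" and e2: "e \<in> chs E cs2" by blast
    have sub: "e \<subseteq> c"
    proof
      fix x assume x: "x \<in> e"
      then have "x \<in> set cs1" "x \<in> set cs2" using e1 e2 unfolding chs_def by auto
      then obtain a where a: "a < j + 1" "x = cs ! a" using set1 by auto
      have "x = cs ! 0 \<or> (\<exists>b\<in>{j..<n}. x = cs ! b)" using \<open>x \<in> set cs2\<close> set2 by auto
      then have "x = cs ! 0 \<or> a = j"
      proof
        assume "\<exists>b\<in>{j..<n}. x = cs ! b"
        then obtain b where "b \<in> {j..<n}" "x = cs ! b" by blast
        then show ?thesis using inj[of a b] a jn by simp
      qed simp
      then show "x \<in> c" unfolding c_def using a by auto
    qed
    have "card e = 2" using e1 card2 unfolding chs_def by auto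
    moreover have "finite c" "card c \<le> 2" unfolding c_def by (auto simp: card_insert_if)
    ultimately have "e = c" using card_seteq[OF \<open>finite c\<close> sub] by simp
    then show False using e1 c1 unfolding chs_def by simp
  qed
  have fin: "finite (chs E ds)" for ds :: "'a list"
  proof -
    have "chs E ds \<subseteq> Pow (set ds)" unfolding chs_def by auto
    then show ?thesis by (rule finite_subset) simp
  qed
  have "chs E cs1 \<union> chs E cs2 \<union> {c} \<subseteq> chs E cs" using ch1 ch2 cc by blast
  then have "card (chs E cs1 \<union> chs E cs2 \<union> {c}) \<le> card (chs E cs)" by (rule card_mono[OF fin])
  moreover have "card (chs E cs1 \<union> chs E cs2 \<union> {c}) = card (chs E cs1) + card (chs E cs2) + 1"
  proof -
    have "c \<notin> chs E cs1 \<union> chs E cs2" using ch1 ch2 by blast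
    then show ?thesis using disj fin by (simp add: card_Un_disjoint card_insert_if)
  qed
  moreover have "j + 1 - 3 \<le> card (chs E cs1)"
    using IH[of cs1] l1 jn j d1 s1 sub ce1 by simp
  moreover have "n - j + 1 - 3 \<le> card (chs E cs2)"
    using IH[of cs2] l2 jn j d2 s1 sub ce2 by simp
  ultimately show ?thesis using jn j by arith
qed

lemma chord_pos:
  fixes i j n :: nat
  assumes "i < n" "j < n" "i \<noteq> j" "j \<noteq> (i + 1) mod n" "i \<noteq> (j + 1) mod n"
  shows "2 \<le> (j + n - i) mod n \<and> (j + n - i) mod n \<le> n - 2"
proof -
  have m1: "(i + 1) mod n = (if Suc i = n then 0 else Suc i)" using assms(1) Suc_mod_eq[of i n] by simp
  have m2: "(j + 1) mod n = (if Suc j = n then 0 else Suc j)" using assms(2) Suc_mod_eq[of j n] by simp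
  show ?thesis
  proof (cases "i < j")
    case True
    have e: "j + n - i = (j - i) + n" using True by arith
    have "(j + n - i) mod n = j - i" unfolding e using assms(2) by simp
    then show ?thesis using assms(3-5) m1 m2 True assms(1,2) by (simp split: if_splits; arith)
  next
    case False
    have "j + n - i < n" using False assms(1,3) by arith
    then have "(j + n - i) mod n = j + n - i" by simp
    then show ?thesis using assms(3-5) m1 m2 False assms(1,2) by (simp split: if_splits; arith)
  qed
qed

lemma chs_count:
  assumes ch: "chordal V E" and c2: "\<forall>e\<in>E. card e = 2"
  shows "3 \<le> length cs \<Longrightarrow> distinct cs \<Longrightarrow> set cs \<subseteq> V \<Longrightarrow> cedges cs \<subseteq> E \<Longrightarrow>
         length cs - 3 \<le> card (chs E cs)"
proof (induction "length cs" arbitrary: cs rule: less_induct)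
  case less
  define n where "n = length cs"
  show ?case
  proof (cases "n = 3")
    case True then show ?thesis using n_def by simp
  next
    case False
    then have n4: "4 \<le> n" using less.prems n_def by simp
    have "\<forall>i<length cs. {cs ! i, cs ! ((i + 1) mod length cs)} \<in> E"
      using less.prems(4) cedgesI[of _ cs] by blast
    then have "is_cycle V E cs" unfolding is_cycle_def using less.prems by simp
    then have "has_chord E cs" using ch n4 n_def unfolding chordal_def by simp
    then obtain i j where ij: "i < n" "j < n" "i \<noteq> j" "j \<noteq> (i + 1) mod n" "i \<noteq> (j + 1) mod n"
      "{cs ! i, cs ! j} \<in> E" unfolding has_chord_def n_def by blast
    define j' where "j' = (j + n - i) mod n"
    define cs' where "cs' = rotate i cs"
    have jp: "2 \<le> j'" "j' \<le> n - 2" using chord_pos[OF ij(1-5)] unfolding j'_def by auto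
    have len': "length cs' = n" unfolding cs'_def n_def by simp
    have np: "0 < n" using n4 by simp
    have "cs' ! 0 = cs ! i" unfolding cs'_def using np ij n_def by (simp add: nth_rotate)
    moreover have "cs' ! j' = cs ! j"
    proof -
      have "j' < n" unfolding j'_def using np by simp
      then have "cs' ! j' = cs ! ((j' + i) mod n)" unfolding cs'_def n_def by (simp add: nth_rotate add.commute)
      also have "(j' + i) mod n = (j + n - i + i) mod n" unfolding j'_def by (simp add: mod_simps)
      also have "j + n - i + i = j + n" using ij by simp
      finally show ?thesis using ij by simp
    qed
    ultimately have c: "{cs' ! 0, cs' ! j'} \<in> E" using ij by simp
    have "n - 3 \<le> card (chs E cs')"
    proof (rule split_step[OF len' n4 _ _ _ c2 jp c])
      show "distinct cs'" "set cs' \<subseteq> V" "cedges cs' \<subseteq> E"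
        using less.prems unfolding cs'_def by (simp_all add: cedges_rotate)
      fix ds :: "'a list"
      assume "length ds < n" "3 \<le> length ds" "distinct ds" "set ds \<subseteq> V" "cedges ds \<subseteq> E"
      then show "length ds - 3 \<le> card (chs E ds)" using less.hyps[of ds] n_def by simp
    qed
    then show ?thesis unfolding cs'_def n_def by (simp add: chs_rotate)
  qed
qed

lemma fun_add_apply: "(x + y) f = x f + (y :: 'a \<Rightarrow> real) f" by (simp add: plus_fun_def)
lemma fun_scale_apply: "(c *\<^sub>R x) f = c * (x :: 'a \<Rightarrow> real) f" by (simp add: scaleR_fun_def)
lemma fun_diff_apply: "(x - y) f = x f - (y :: 'a \<Rightarrow> real) f" by (simp add: fun_diff_def)
lemma fun_zero_apply: "(0 :: 'a \<Rightarrow> real) f = 0" by (simp add: zero_fun_def)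

lemma affdim_eq:
  fixes S :: "'a::real_vector set"
  assumes a: "a \<in> S" and U: "subspace U" and SU: "\<forall>x\<in>S. x - a \<in> U"
    and Usp: "U \<subseteq> span ((\<lambda>x. x - a) ` S)"
  shows "affdim S = int (dim U)"
proof -
  define b where "b = (SOME a. a \<in> S)"
  have b: "b \<in> S" unfolding b_def using a by (rule someI)
  have "span ((\<lambda>x. x - b) ` S) = U"
  proof
    show "span ((\<lambda>x. x - b) ` S) \<subseteq> U"
    proof (rule real_vector.span_minimal[OF _ U])
      show "(\<lambda>x. x - b) ` S \<subseteq> U"
      proof
        fix y assume "y \<in> (\<lambda>x. x - b) ` S"
        then obtain x where x: "x \<in> S" "y = x - b" by blast
        have "x - a \<in> U" "b - a \<in> U" using x SU b by auto
        then have "(x - a) - (b - a) \<in> U" using real_vector.subspace_diff[OF U] by blast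
        then show "y \<in> U" using x by simp
      qed
    qed
    have "span ((\<lambda>x. x - a) ` S) \<subseteq> span ((\<lambda>x. x - b) ` S)"
    proof (rule real_vector.span_minimal[OF _ real_vector.subspace_span])
      show "(\<lambda>x. x - a) ` S \<subseteq> span ((\<lambda>x. x - b) ` S)"
      proof
        fix y assume "y \<in> (\<lambda>x. x - a) ` S"
        then obtain x where x: "x \<in> S" "y = x - a" by blast
        have "x - b \<in> span ((\<lambda>x. x - b) ` S)" "a - b \<in> span ((\<lambda>x. x - b) ` S)"
          using x a by (auto intro: real_vector.span_base)
        then have "(x - b) - (a - b) \<in> span ((\<lambda>x. x - b) ` S)" using real_vector.span_diff by blast
        then show "y \<in> span ((\<lambda>x. x - b) ` S)" using x by simp
      qed
    qed
    then show "U \<subseteq> span ((\<lambda>x. x - b) ` S)" using Usp by blast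
  qed
  then have "dim ((\<lambda>x. x - b) ` S) = dim U"
    using real_vector.dim_span[of "(\<lambda>x. x - b) ` S"] by simp
  then show ?thesis unfolding affdim_def b_def using a by auto
qed

lemma subspace_zero_at: "subspace {y :: 'a \<Rightarrow> real. y f = 0}"
  unfolding real_vector.subspace_def by (simp add: fun_add_apply fun_scale_apply fun_zero_apply)

lemma indep_delta:
  fixes v :: "'b \<Rightarrow> ('b \<Rightarrow> real)"
  assumes fin: "finite J" and d: "\<And>f g. f \<in> J \<Longrightarrow> g \<in> J \<Longrightarrow> v f g = (if f = g then 1 else 0)"
  shows "independent (v ` J) \<and> inj_on v J"
  using fin d
proof (induction J rule: finite_induct)
  case empty then show ?case using real_vector.independent_empty by simp
next
  case (insert f J)
  have dJ: "\<And>f' g. f' \<in> J \<Longrightarrow> g \<in> J \<Longrightarrow> v f' g = (if f' = g then 1 else 0)"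
    using insert.prems by simp
  have IH: "independent (v ` J)" "inj_on v J" using insert.IH[OF dJ] by auto
  have vf: "v f f = 1" using insert.prems by simp
  have spz: "span (v ` J) \<subseteq> {y. y f = 0}"
  proof (rule real_vector.span_minimal[OF _ subspace_zero_at])
    show "v ` J \<subseteq> {y. y f = 0}"
    proof
      fix y assume "y \<in> v ` J"
      then obtain g where g: "g \<in> J" "y = v g" by blast
      then have "g \<noteq> f" using insert.hyps(2) by auto
      then have "v g f = 0" using insert.prems g by simp
      then show "y \<in> {y. y f = 0}" using g by simp
    qed
  qed
  have nsp: "v f \<notin> span (v ` J)"
  proof
    assume "v f \<in> span (v ` J)"
    then have "v f \<in> {y. y f = 0}" using spz by (rule subsetD[rotated])
    then show False using vf by simp
  qed
  have nin: "v f \<notin> v ` J"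
  proof
    assume "v f \<in> v ` J"
    then have "v f \<in> span (v ` J)" by (rule real_vector.span_base)
    then show False using nsp by simp
  qed
  have "independent (insert (v f) (v ` J))"
    by (rule real_vector.independent_insertI[OF nsp IH(1)])
  moreover have "inj_on v (insert f J)" using IH nin insert.hyps(2) by simp
  ultimately show ?case by simp
qed

lemma dim_delta:
  fixes v :: "'b \<Rightarrow> ('b \<Rightarrow> real)"
  assumes fin: "finite J" and d: "\<And>f g. f \<in> J \<Longrightarrow> g \<in> J \<Longrightarrow> v f g = (if f = g then 1 else 0)"
  shows "dim (span (v ` J)) = card J"
proof -
  have "independent (v ` J)" "inj_on v J" using indep_delta[OF fin d] by auto
  have "dim (span (v ` J)) = dim (v ` J)" by (rule real_vector.dim_span)
  also have "\<dots> = card (v ` J)" by (rule real_vector.dim_eq_card_independent) fact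
  also have "\<dots> = card J" by (rule card_image) fact
  finally show ?thesis .
qed

lemma cedges_upt:
  assumes "k \<ge> 2"
  shows "cedges [0..<k] = cyc_ext k"
proof -
  have "cedges [0..<k] = {{i, Suc i mod k} | i. i < k}"
  proof -
    have "\<And>i. i < k \<Longrightarrow> [0..<k] ! ((i + 1) mod k) = Suc i mod k" using assms by simp
    then show ?thesis unfolding cedges_def by force
  qed
  then show ?thesis using ext_char[OF assms] by simp
qed

lemma card2_E:
  assumes "k \<ge> 2" "T \<subseteq> cyc_int k"
  shows "\<forall>e\<in>cyc_ext k \<union> T. card e = 2"
proof
  fix e assume e: "e \<in> cyc_ext k \<union> T"
  show "card e = 2"
  proof (cases "e \<in> cyc_ext k")
    case True
    then obtain u where u: "u < k" "e = {u, Suc u mod k}" using ext_char[OF assms(1)] by auto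
    have "u \<noteq> Suc u mod k" using u assms(1) by (cases "Suc u = k") auto
    then show ?thesis using u by simp
  next
    case False
    then have "e \<in> cyc_int k" using e assms(2) by auto
    then obtain u v where "e = {u, v}" "u \<noteq> v" unfolding cyc_int_def by blast
    then show ?thesis by simp
  qed
qed

lemma valid_X:
  assumes k: "k \<ge> 4" and x: "x \<in> X_cyc k"
  shows "real k - 3 \<le> (\<Sum>f\<in>cyc_int k. x f)"
proof -
  define T where "T = {f \<in> cyc_int k. x f = 1}"
  have TI: "T \<subseteq> cyc_int k" unfolding T_def by auto
  have ch: "chordal (cyc_V k) (cyc_ext k \<union> T)" using x unfolding X_cyc_def T_def by simp
  have k2: "k \<ge> 2" using k by simp
  have "k - 3 \<le> card (chs (cyc_ext k \<union> T) [0..<k])"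
    using chs_count[OF ch card2_E[OF k2 TI], of "[0..<k]"] k cedges_upt[OF k2] unfolding cyc_V_def
    by (simp add: atLeast0LessThan)
  moreover have "chs (cyc_ext k \<union> T) [0..<k] = T"
  proof -
    have "{e \<in> cyc_ext k \<union> T. e \<subseteq> set [0..<k]} = cyc_ext k \<union> T"
      using ext_sub[OF k2] int_sub[of _ k] TI by (auto simp: atLeast0LessThan)
    moreover have "T \<inter> cyc_ext k = {}" using TI unfolding cyc_int_def by auto
    ultimately show ?thesis unfolding chs_def cedges_upt[OF k2] by auto
  qed
  moreover have "(\<Sum>f\<in>cyc_int k. x f) = (\<Sum>f\<in>cyc_int k. ind T f)"
  proof (rule sum.cong)
    fix f assume "f \<in> cyc_int k"
    then show "x f = ind T f" using x unfolding X_cyc_def T_def ind_def by auto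
  qed simp
  ultimately show ?thesis using sum_ind[OF TI] k by simp
qed

lemma fun_sum_apply: "(sum F A) h = (\<Sum>a\<in>A. (F a :: 'b \<Rightarrow> real) h)"
  by (induction A rule: infinite_finite_induct) (auto simp: fun_add_apply fun_zero_apply)

definition delta :: "nat set \<Rightarrow> nat set \<Rightarrow> real" where
  "delta f = ind {f}"

lemma delta_apply: "delta f h = (if f = h then 1 else 0)"
  unfolding delta_def ind_def by auto

definition VI :: "nat \<Rightarrow> (nat set \<Rightarrow> real) set" where
  "VI k = {y. \<forall>f. f \<notin> cyc_int k \<longrightarrow> y f = 0}"

definition HH :: "nat \<Rightarrow> (nat set \<Rightarrow> real) set" where
  "HH k = {y \<in> VI k. (\<Sum>f\<in>cyc_int k. y f) = 0}"

lemma subspace_VI: "subspace (VI k)"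
  unfolding real_vector.subspace_def VI_def by (simp add: fun_add_apply fun_scale_apply fun_zero_apply)

lemma subspace_HH: "subspace (HH k)"
  unfolding real_vector.subspace_def HH_def VI_def
  by (simp add: fun_add_apply fun_scale_apply fun_zero_apply sum.distrib sum_distrib_left[symmetric])

lemma VI_span: "VI k = span (delta ` cyc_int k)"
proof
  show "span (delta ` cyc_int k) \<subseteq> VI k"
    by (rule real_vector.span_minimal[OF _ subspace_VI]) (auto simp: VI_def delta_apply)
  show "VI k \<subseteq> span (delta ` cyc_int k)"
  proof
    fix y assume y: "y \<in> VI k"
    have "y = (\<Sum>f\<in>cyc_int k. y f *\<^sub>R delta f)"
    proof
      fix h
      have "(\<Sum>f\<in>cyc_int k. y f *\<^sub>R delta f) h = (\<Sum>f\<in>cyc_int k. y f * (if f = h then 1 else 0))"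
        by (simp add: fun_sum_apply fun_scale_apply delta_apply)
      also have "\<dots> = (if h \<in> cyc_int k then y h else 0)"
        by (simp add: finite_int if_distrib sum.delta' cong: if_cong)
      also have "\<dots> = y h" using y unfolding VI_def by auto
      finally show "y h = (\<Sum>f\<in>cyc_int k. y f *\<^sub>R delta f) h" by simp
    qed
    also have "\<dots> \<in> span (delta ` cyc_int k)"
      by (intro real_vector.span_sum real_vector.span_scale real_vector.span_base) auto
    finally show "y \<in> span (delta ` cyc_int k)" .
  qed
qed

lemma dim_VI: "dim (VI k) = card (cyc_int k)"
  unfolding VI_span by (rule dim_delta[OF finite_int]) (simp add: delta_apply)

lemma HH_span:
  assumes g0: "g0 \<in> cyc_int k"
  shows "HH k = span ((\<lambda>f. delta f - delta g0) ` (cyc_int k - {g0}))"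
proof
  show "span ((\<lambda>f. delta f - delta g0) ` (cyc_int k - {g0})) \<subseteq> HH k"
  proof (rule real_vector.span_minimal[OF _ subspace_HH])
    show "(\<lambda>f. delta f - delta g0) ` (cyc_int k - {g0}) \<subseteq> HH k"
    proof
      fix y assume "y \<in> (\<lambda>f. delta f - delta g0) ` (cyc_int k - {g0})"
      then obtain f where f: "f \<in> cyc_int k" "y = delta f - delta g0" by blast
      have "(\<Sum>h\<in>cyc_int k. y h) = (\<Sum>h\<in>cyc_int k. delta f h) - (\<Sum>h\<in>cyc_int k. delta g0 h)"
        using f by (simp add: fun_diff_apply sum_subtractf)
      also have "\<dots> = 0" using f g0 finite_int by (simp add: delta_apply sum.delta)
      finally show "y \<in> HH k" using f g0 unfolding HH_def VI_def by (auto simp: fun_diff_apply delta_apply)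
    qed
  qed
  show "HH k \<subseteq> span ((\<lambda>f. delta f - delta g0) ` (cyc_int k - {g0}))"
  proof
    fix y assume y: "y \<in> HH k"
    have s0: "(\<Sum>f\<in>cyc_int k. y f) = 0" and yv: "\<And>f. f \<notin> cyc_int k \<Longrightarrow> y f = 0"
      using y unfolding HH_def VI_def by auto
    have sm: "(\<Sum>f\<in>cyc_int k - {g0}. y f) = - y g0"
      using s0 sum.remove[OF finite_int g0, of y] by simp
    have "y = (\<Sum>f\<in>cyc_int k - {g0}. y f *\<^sub>R (delta f - delta g0))"
    proof
      fix h
      have "(\<Sum>f\<in>cyc_int k - {g0}. y f *\<^sub>R (delta f - delta g0)) h
          = (\<Sum>f\<in>cyc_int k - {g0}. y f * (if f = h then 1 else 0)) - (\<Sum>f\<in>cyc_int k - {g0}. y f) * delta g0 h"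
        by (simp add: fun_sum_apply fun_scale_apply fun_diff_apply delta_apply right_diff_distrib
            sum_subtractf sum_distrib_right)
      also have "\<dots> = (if h \<in> cyc_int k - {g0} then y h else 0) + y g0 * delta g0 h"
        using sm by (simp add: finite_int if_distrib sum.delta' cong: if_cong)
      also have "\<dots> = y h" using yv by (auto simp: delta_apply)
      finally show "y h = (\<Sum>f\<in>cyc_int k - {g0}. y f *\<^sub>R (delta f - delta g0)) h" by simp
    qed
    also have "\<dots> \<in> span ((\<lambda>f. delta f - delta g0) ` (cyc_int k - {g0}))"
      by (intro real_vector.span_sum real_vector.span_scale real_vector.span_base) auto
    finally show "y \<in> span ((\<lambda>f. delta f - delta g0) ` (cyc_int k - {g0}))" .
  qed
qed

lemma dim_HH:
  assumes g0: "g0 \<in> cyc_int k"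
  shows "dim (HH k) = card (cyc_int k) - 1"
proof -
  have "dim (HH k) = card (cyc_int k - {g0})"
    unfolding HH_span[OF g0]
    by (rule dim_delta) (auto simp: finite_int delta_apply fun_diff_apply)
  then show ?thesis using g0 finite_int by simp
qed

lemma X_VI: "X_cyc k \<subseteq> VI k"
  unfolding X_cyc_def VI_def by auto

lemma P_VI: "convex hull X_cyc k \<subseteq> VI k"
  using hull_minimal[of "X_cyc k" "VI k" convex] X_VI[of k] subspace_imp_convex[OF subspace_VI[of k]] by blast

lemma valid_P:
  assumes k: "k \<ge> 4"
  shows "convex hull X_cyc k \<subseteq> {y. real k - 3 \<le> (\<Sum>f\<in>cyc_int k. y f)}"
proof (rule hull_minimal)
  show "X_cyc k \<subseteq> {y. real k - 3 \<le> (\<Sum>f\<in>cyc_int k. y f)}" using valid_X[OF k] by auto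
  show "convex {y. real k - 3 \<le> (\<Sum>f\<in>cyc_int k. y f)}"
    unfolding convex_def
  proof (intro ballI allI impI)
    fix x y :: "nat set \<Rightarrow> real" and u v :: real
    assume x: "x \<in> {y. real k - 3 \<le> (\<Sum>f\<in>cyc_int k. y f)}" and y: "y \<in> {y. real k - 3 \<le> (\<Sum>f\<in>cyc_int k. y f)}"
      and uv: "0 \<le> u" "0 \<le> v" "u + v = 1"
    have "(\<Sum>f\<in>cyc_int k. (u *\<^sub>R x + v *\<^sub>R y) f) = u * (\<Sum>f\<in>cyc_int k. x f) + v * (\<Sum>f\<in>cyc_int k. y f)"
      by (simp add: fun_add_apply fun_scale_apply sum.distrib sum_distrib_left)
    moreover have "u * (real k - 3) \<le> u * (\<Sum>f\<in>cyc_int k. x f)" using x uv by (simp add: mult_left_mono)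
    moreover have "v * (real k - 3) \<le> v * (\<Sum>f\<in>cyc_int k. y f)" using y uv by (simp add: mult_left_mono)
    moreover have "u * (real k - 3) + v * (real k - 3) = real k - 3" using uv by (simp add: distrib_right[symmetric])
    ultimately show "u *\<^sub>R x + v *\<^sub>R y \<in> {y. real k - 3 \<le> (\<Sum>f\<in>cyc_int k. y f)}" by simp
  qed
qed

lemma fan0_X: assumes k: "k \<ge> 4" shows "ind (fan0 k) \<in> X_cyc k"
  by (rule ind_X[OF fan0_int[OF k] fan0_chordal[OF k]])

lemma fan0_sum: assumes k: "k \<ge> 4" shows "(\<Sum>f\<in>cyc_int k. ind (fan0 k) f) = real k - 3"
  using sum_ind[OF fan0_int[OF k]] card_fan0[of k] k by simp

lemma ind_minus_one: "f \<in> A \<Longrightarrow> ind A - ind (A - {f}) = delta f"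
  by (rule ext) (auto simp: fun_diff_apply ind_def delta_apply)

lemma affdim_P:
  assumes k: "k \<ge> 4"
  shows "affdim (convex hull X_cyc k) = int (card (cyc_int k))"
proof -
  define a where "a = ind (fan0 k)"
  define P where "P = convex hull X_cyc k"
  have aP: "a \<in> P" unfolding a_def P_def by (rule subsetD[OF hull_subset fan0_X[OF k]])
  have aV: "a \<in> VI k" using aP P_VI unfolding P_def by blast
  have "affdim P = int (dim (VI k))"
  proof (rule affdim_eq[OF aP subspace_VI])
    show "\<forall>x\<in>P. x - a \<in> VI k"
    proof
      fix x assume "x \<in> P"
      then have "x \<in> VI k" using P_VI unfolding P_def by blast
      then show "x - a \<in> VI k" using aV real_vector.subspace_diff[OF subspace_VI] by blast
    qed
    show "VI k \<subseteq> span ((\<lambda>x. x - a) ` P)"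
      unfolding VI_span
    proof (rule real_vector.span_minimal[OF _ real_vector.subspace_span], rule subsetI)
      fix y assume "y \<in> delta ` cyc_int k"
      then obtain f where f: "f \<in> cyc_int k" "y = delta f" by blast
      have "ind (cyc_int k) \<in> P" "ind (cyc_int k - {f}) \<in> P"
        unfolding P_def by (rule subsetD[OF hull_subset full_X], rule subsetD[OF hull_subset fullm_X[OF f(1)]])
      then have "ind (cyc_int k) - a \<in> span ((\<lambda>x. x - a) ` P)" "ind (cyc_int k - {f}) - a \<in> span ((\<lambda>x. x - a) ` P)"
        by (simp_all add: real_vector.span_base)
      then have "(ind (cyc_int k) - a) - (ind (cyc_int k - {f}) - a) \<in> span ((\<lambda>x. x - a) ` P)"
        by (rule real_vector.span_diff)
      then show "y \<in> span ((\<lambda>x. x - a) ` P)" using ind_minus_one[OF f(1)] f by simp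
    qed
  qed
  then show ?thesis unfolding P_def dim_VI .
qed

definition FF :: "nat \<Rightarrow> (nat set \<Rightarrow> real) set" where
  "FF k = {x \<in> convex hull X_cyc k. (\<Sum>f\<in>cyc_int k. x f) = real k - 3}"

definition WW :: "nat \<Rightarrow> (nat set \<Rightarrow> real) set" where
  "WW k = span ((\<lambda>x. x - ind (fan0 k)) ` FF k)"

lemma FF_diff: "t \<in> FF k \<Longrightarrow> t' \<in> FF k \<Longrightarrow> t - t' \<in> WW k"
proof -
  assume t: "t \<in> FF k" and t': "t' \<in> FF k"
  have "t - ind (fan0 k) \<in> WW k" "t' - ind (fan0 k) \<in> WW k"
    unfolding WW_def using t t' by (simp_all add: real_vector.span_base)
  then have "(t - ind (fan0 k)) - (t' - ind (fan0 k)) \<in> WW k"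
    unfolding WW_def by (rule real_vector.span_diff)
  then show ?thesis by simp
qed

lemma tri_FF:
  assumes k: "k \<ge> 4" "a < k" and T: "T \<subseteq> cyc_int k" "chordal (cyc_V k) (cyc_ext k \<union> T)" "card T = k - 3"
  shows "ind (rot k a ` T) \<in> FF k"
proof -
  have X: "ind (rot k a ` T) \<in> X_cyc k" and c: "card (rot k a ` T) = card T" using rot_X[OF k T(1,2)] by auto
  have sub: "rot k a ` T \<subseteq> cyc_int k" using rot_int_sub[of k a T] k T by simp
  have "(\<Sum>f\<in>cyc_int k. ind (rot k a ` T) f) = real k - 3" using sum_ind[OF sub] c T(3) k by simp
  moreover have "ind (rot k a ` T) \<in> convex hull X_cyc k" by (rule subsetD[OF hull_subset X])
  ultimately show ?thesis unfolding FF_def by simp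
qed

lemma ind_flip:
  assumes "d \<in> T" "s \<notin> T"
  shows "ind T - ind (insert s (T - {d})) = delta d - delta s"
  using assms by (intro ext) (auto simp: fun_diff_apply ind_def delta_apply)

lemma D_flip:
  assumes k: "k \<ge> 4" "a < k" and j: "2 \<le> j" "j \<le> k - 2"
  shows "delta (rot k a {0, j}) - delta (rot k a {j - 1, j + 1}) \<in> WW k"
proof -
  have inj: "inj_on (rot k a) (Pow {..<k})" using rot_inj[of a k] k by simp
  have fP: "fan0 k \<subseteq> Pow {..<k}" using fan0_int[OF k(1)] int_sub[of _ k] by auto
  have jk: "j + 1 < k" using j k by arith
  have sP: "{j - 1, j + 1} \<in> Pow {..<k}" using jk by auto
  have dF: "{0, j} \<in> fan0 k" using j unfolding fan0_def by auto
  have sF: "{j - 1, j + 1} \<notin> fan0 k" using j by (simp add: fan0_mem)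
  have d: "rot k a {0, j} \<in> rot k a ` fan0 k" using dF by simp
  have s: "rot k a {j - 1, j + 1} \<notin> rot k a ` fan0 k"
    using inj_on_image_mem_iff[OF inj sP fP] sF by simp
  have "rot k a ` flip0 k j = insert (rot k a {j - 1, j + 1}) (rot k a ` fan0 k - rot k a ` {{0, j}})"
    unfolding flip0_def image_insert
    using inj_on_image_set_diff[OF inj, of "fan0 k" "{{0, j}}"] fP dF by auto
  then have eq: "rot k a ` flip0 k j = insert (rot k a {j - 1, j + 1}) (rot k a ` fan0 k - {rot k a {0, j}})" by simp
  have "ind (rot k a ` fan0 k) \<in> FF k"
    by (rule tri_FF[OF k fan0_int[OF k(1)] fan0_chordal[OF k(1)] card_fan0])
  moreover have "ind (rot k a ` flip0 k j) \<in> FF k"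
    by (rule tri_FF[OF k flip0_int[OF k(1) j] flip0_chordal[OF k(1) j] card_flip0[OF k(1) j]])
  ultimately have "ind (rot k a ` fan0 k) - ind (rot k a ` flip0 k j) \<in> WW k" by (rule FF_diff)
  then show ?thesis unfolding eq ind_flip[OF d s] .
qed

definition sv :: "nat \<Rightarrow> nat \<Rightarrow> nat set" where
  "sv k v = {(v + k - 1) mod k, Suc v mod k}"

lemma int_facts:
  assumes "{a, v} \<in> cyc_int k" "k \<ge> 2"
  shows "a < k" "v < k" "a \<noteq> v" "v \<noteq> (a + 1) mod k" "a \<noteq> (v + 1) mod k"
proof -
  from assms(1) obtain i j where ij: "{a, v} = {i, j}" "i < k" "j < k" "i \<noteq> j" "{a, v} \<notin> cyc_ext k"
    unfolding cyc_int_def by blast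
  then show "a < k" "v < k" "a \<noteq> v" by (auto simp: doubleton_eq_iff)
  then show "v \<noteq> (a + 1) mod k" "a \<noteq> (v + 1) mod k" using ij(5) ext_mem[OF assms(2), of a v] by auto
qed

lemma D_A:
  assumes k: "k \<ge> 4" and av: "{a, v} \<in> cyc_int k"
  shows "delta {a, v} - delta (sv k v) \<in> WW k"
proof -
  have k2: "k \<ge> 2" using k by simp
  note F = int_facts[OF av k2]
  define j where "j = (v + k - a) mod k"
  have j: "2 \<le> j" "j \<le> k - 2" using chord_pos[OF F(1,2) F(3) F(4) F(5)] unfolding j_def by auto
  have jv: "(j + a) mod k = v"
  proof -
    have "(j + a) mod k = (v + k - a + a) mod k" unfolding j_def by (simp add: mod_simps)
    also have "v + k - a + a = v + k" using F by simp
    finally show ?thesis using F by simp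
  qed
  have r1: "rot k a {0, j} = {a, v}" using F jv by (simp add: rot_pair add.commute)
  have e1: "(j - 1 + a) mod k = (v + k - 1) mod k"
  proof -
    have "(v + k - 1) mod k = ((j + a) mod k + (k - 1)) mod k" using jv k by simp
    also have "\<dots> = (j + a + (k - 1)) mod k" by (simp add: mod_simps)
    also have "j + a + (k - 1) = (j - 1 + a) + k" using j k by simp
    finally show ?thesis by simp
  qed
  have e2: "(j + 1 + a) mod k = Suc v mod k"
  proof -
    have "Suc v mod k = Suc ((j + a) mod k) mod k" using jv by simp
    also have "\<dots> = (j + 1 + a) mod k" by (simp add: mod_simps)
    finally show ?thesis by simp
  qed
  have r2: "rot k a {j - 1, j + 1} = sv k v" unfolding sv_def rot_pair e1 e2 by simp
  show ?thesis using D_flip[OF k F(1) j] unfolding r1 r2 .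
qed

lemma WW_subspace: "subspace (WW k)"
  unfolding WW_def by (rule real_vector.subspace_span)

lemma WW_add: "x \<in> WW k \<Longrightarrow> y \<in> WW k \<Longrightarrow> x + y \<in> WW k"
  unfolding WW_def by (rule real_vector.span_add)

lemma WW_diff: "x \<in> WW k \<Longrightarrow> y \<in> WW k \<Longrightarrow> x - y \<in> WW k"
  unfolding WW_def by (rule real_vector.span_diff)

lemma WW_zero: "0 \<in> WW k"
  unfolding WW_def by (rule real_vector.span_zero)

lemma D_int:
  assumes k: "k \<ge> 4" and uv: "{u, v} \<in> cyc_int k"
  shows "delta (sv k u) - delta (sv k v) \<in> WW k"
proof -
  have "delta {u, v} - delta (sv k v) \<in> WW k" by (rule D_A[OF k uv])
  moreover have "delta {v, u} - delta (sv k u) \<in> WW k" using uv by (intro D_A[OF k]) (simp add: insert_commute)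
  ultimately have "(delta {u, v} - delta (sv k v)) - (delta {v, u} - delta (sv k u)) \<in> WW k" by (rule WW_diff)
  then show ?thesis by (simp add: insert_commute)
qed

lemma D_trans: "delta a - delta b \<in> WW k \<Longrightarrow> delta b - delta c \<in> WW k \<Longrightarrow> delta a - delta c \<in> WW k"
  using WW_add[of "delta a - delta b" k "delta b - delta c"] by simp

lemma D_sym: "delta a - delta b \<in> WW k \<Longrightarrow> delta b - delta a \<in> WW k"
  using WW_diff[OF WW_zero, of "delta a - delta b" k] by simp

lemma D_adj5:
  assumes k: "k \<ge> 5" and u: "u < k"
  shows "delta (sv k u) - delta (sv k (Suc u mod k)) \<in> WW k"
proof -
  define v where "v = Suc u mod k"
  define w where "w = (u + 3) mod k"
  have k2: "k \<ge> 2" "k \<ge> 4" using k by auto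
  have vv: "v = (if Suc u = k then 0 else Suc u)" unfolding v_def using u by (simp add: Suc_mod_eq)
  have ww: "w = (if u + 3 < k then u + 3 else u + 3 - k)" unfolding w_def using u k
    by (auto simp: mod_if)
  have vk: "v < k" and wk: "w < k" unfolding v_def w_def using k by auto
  have "{u, w} \<notin> cyc_ext k" using u wk vv ww k by (simp add: ext_mem'[OF k2(1)] split: if_splits; arith)
  then have uw: "{u, w} \<in> cyc_int k" using int_intro[OF u wk] vv ww u k by (auto split: if_splits)
  have "{v, w} \<notin> cyc_ext k" using u wk vk vv ww k by (simp add: ext_mem'[OF k2(1)] split: if_splits; arith)
  then have vw: "{v, w} \<in> cyc_int k" using int_intro[OF vk wk] vv ww u k by (auto split: if_splits)
  have "delta (sv k u) - delta (sv k w) \<in> WW k" by (rule D_int[OF k2(2) uw])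
  moreover have "delta (sv k w) - delta (sv k v) \<in> WW k" by (rule D_sym[OF D_int[OF k2(2) vw]])
  ultimately show ?thesis unfolding v_def by (rule D_trans)
qed

lemma D_adj4:
  assumes u: "u < 4"
  shows "delta (sv 4 u) - delta (sv 4 (Suc u mod 4)) \<in> WW 4"
proof -
  have cases: "u = 0 \<or> u = 1 \<or> u = 2 \<or> u = 3" using u by auto
  have ne: "{u, (u + 2) mod 4} \<notin> cyc_ext 4" using cases by (auto simp: ext_mem')
  have c: "{u, (u + 2) mod 4} \<in> cyc_int 4"
    by (rule int_intro[OF u _ _ ne]) (use cases in auto)
  have e1: "sv 4 (Suc u mod 4) = {u, (u + 2) mod 4}" using cases by (auto simp: sv_def)
  have e2: "sv 4 ((u + 2) mod 4) = sv 4 u" using cases by (auto simp: sv_def)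
  have "delta {u, (u + 2) mod 4} - delta (sv 4 ((u + 2) mod 4)) \<in> WW 4" by (rule D_A[OF _ c]) simp
  then have "delta (sv 4 (Suc u mod 4)) - delta (sv 4 u) \<in> WW 4" unfolding e1 e2 .
  then show ?thesis by (rule D_sym)
qed

lemma D_adj:
  assumes k: "k \<ge> 4" and u: "u < k"
  shows "delta (sv k u) - delta (sv k (Suc u mod k)) \<in> WW k"
proof (cases "k = 4")
  case True then show ?thesis using D_adj4 u by simp
next
  case False then show ?thesis using D_adj5[OF _ u] k by simp
qed

lemma D_sv:
  assumes k: "k \<ge> 4" and u: "u < k" and v: "v < k"
  shows "delta (sv k u) - delta (sv k v) \<in> WW k"
proof -
  have k2: "k \<ge> 2" using k by simp
  consider "u = v" | "u \<noteq> v" "{u, v} \<in> cyc_ext k" | "u \<noteq> v" "{u, v} \<notin> cyc_ext k" by blast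
  then show ?thesis
  proof cases
    case 1 then show ?thesis using WW_zero by simp
  next
    case 2
    then have "v = Suc u mod k \<or> u = Suc v mod k" using ext_mem[OF k2] by auto
    then show ?thesis
    proof
      assume "v = Suc u mod k" then show ?thesis using D_adj[OF k u] by simp
    next
      assume "u = Suc v mod k" then show ?thesis using D_sym[OF D_adj[OF k v]] by simp
    qed
  next
    case 3
    then have "{u, v} \<in> cyc_int k" using int_intro[OF u v] by simp
    then show ?thesis by (rule D_int[OF k])
  qed
qed

lemma D_all:
  assumes k: "k \<ge> 4" and f: "f \<in> cyc_int k" and g: "g \<in> cyc_int k"
  shows "delta f - delta g \<in> WW k"
proof -
  have k2: "k \<ge> 2" using k by simp
  obtain a v where av: "f = {a, v}" using f unfolding cyc_int_def by blast
  obtain b w where bw: "g = {b, w}" using g unfolding cyc_int_def by blast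
  have "delta f - delta (sv k v) \<in> WW k" using D_A[OF k] f av by simp
  moreover have "delta (sv k v) - delta (sv k w) \<in> WW k"
    using D_sv[OF k] int_facts[OF f[unfolded av] k2] int_facts[OF g[unfolded bw] k2] by simp
  moreover have "delta (sv k w) - delta g \<in> WW k" using D_sym[OF D_A[OF k]] g bw by simp
  ultimately show ?thesis by (blast intro: D_trans)
qed

lemma g0_int: assumes k: "k \<ge> 4" shows "{0, 2} \<in> cyc_int k"
proof (rule int_intro)
  show "{0, 2} \<notin> cyc_ext k" using k by (simp add: ext_mem')
qed (use k in auto)

lemma a0_FF: assumes k: "k \<ge> 4" shows "ind (fan0 k) \<in> FF k"
  unfolding FF_def using subsetD[OF hull_subset fan0_X[OF k]] fan0_sum[OF k] by simp

lemma affdim_F: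
  assumes k: "k \<ge> 4"
  shows "affdim (FF k) = int (card (cyc_int k) - 1)"
proof -
  define a where "a = ind (fan0 k)"
  have aF: "a \<in> FF k" unfolding a_def by (rule a0_FF[OF k])
  have aV: "a \<in> VI k" using aF P_VI unfolding FF_def by blast
  have "affdim (FF k) = int (dim (HH k))"
  proof (rule affdim_eq[OF aF subspace_HH])
    show "\<forall>x\<in>FF k. x - a \<in> HH k"
    proof
      fix x assume x: "x \<in> FF k"
      then have "x \<in> VI k" using P_VI unfolding FF_def by blast
      then have "x - a \<in> VI k" using aV real_vector.subspace_diff[OF subspace_VI] by blast
      moreover have "(\<Sum>f\<in>cyc_int k. (x - a) f) = 0"
        using x aF unfolding FF_def by (simp add: fun_diff_apply sum_subtractf)
      ultimately show "x - a \<in> HH k" unfolding HH_def by simp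
    qed
    show "HH k \<subseteq> span ((\<lambda>x. x - a) ` FF k)"
      unfolding HH_span[OF g0_int[OF k]]
    proof (rule real_vector.span_minimal)
      show "(\<lambda>f. delta f - delta {0, 2}) ` (cyc_int k - {{0, 2}}) \<subseteq> span ((\<lambda>x. x - a) ` FF k)"
        using D_all[OF k _ g0_int[OF k]] unfolding WW_def a_def by auto
      show "subspace (span ((\<lambda>x. x - a) ` FF k))" by (rule real_vector.subspace_span)
    qed
  qed
  then show ?thesis using dim_HH[OF g0_int[OF k]] by simp
qed

theorem proposition2:
  fixes k :: nat
  assumes "k \<ge> 4"
  shows "facet_defining (convex hull (X_cyc k)) (\<lambda>x. \<Sum>f\<in>cyc_int k. x f) (real (card (cyc_V k)) - 3)"
proof -
  have ck: "card (cyc_V k) = k" unfolding cyc_V_def by simp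
  have F: "{x \<in> convex hull X_cyc k. (\<Sum>f\<in>cyc_int k. x f) = real k - 3} = FF k" unfolding FF_def by simp
  have pos: "card (cyc_int k) \<ge> 1"
    using g0_int[OF assms] finite_int card_0_eq[of "cyc_int k"] by fastforce
  show ?thesis
    unfolding facet_defining_def ck F
  proof (intro conjI)
    show "\<forall>x\<in>convex hull X_cyc k. real k - 3 \<le> (\<Sum>f\<in>cyc_int k. x f)" using valid_P[OF assms] by blast
    show "FF k \<noteq> {}" using a0_FF[OF assms] by blast
    show "affdim (FF k) = affdim (convex hull X_cyc k) - 1"
      using affdim_F[OF assms] affdim_P[OF assms] pos by simp
  qed
qed

end
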